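(* Let $\mathcal G$ be a finite reduced collection of allowed words of $\Sigma_A$ (no word of $\mathcal G$ is a subword of another). Write $\mathcal G\setminus\Sigma$ for the words of $\mathcal G$ of length $\ge2$ and $\Sigma\setminus\mathcal G$ for the symbols not belonging to $\mathcal G$. For $i\in\Sigma\setminus\mathcal G$ let $F_i(z)=\sum_{n\ge1}\mu(n,i)z^n$, where $\mu(n,i)$ is the total $\mu$-measure of cylinders based at allowed words of length $n$ ending with $i$ and containing no word of $\mathcal G$ as a subword. For $u\in\mathcal G\setminus\Sigma$ let $G_u(z)=\sum_{n\ge1}\nu(n,u)z^n$, where $\nu(n,u)$ is the total $\mu$-measure of cylinders based at allowed words of length $n$ which contain no word of $\mathcal G$ as a subword except for a single occurrence of $u$ at the end. Then, as formal power series, for each $i\in\Sigma\setminus\mathcal G$ and each $u\in\mathcal G\setminus\Sigma$: $$F_i(z)-p_iz+\sum_{v\in\mathcal G\setminus\Sigma}\chi_{i,t(v)}G_v(z)=z\sum_{j\in\Sigma\setminus\mathcal G}F_j(z)P_{ji},$$ $$z^{|u|-1}\delta_uF_{i(u)}(z)=\sum_{v\in\mathcal G\setminus\Sigma}\tilde\tau_{v,u}(z)G_v(z).$$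
   Context: Let $\Sigma=\{1,\dots,N\}$, $A$ an irreducible $N\times N$ $0$–$1$ matrix, $\Sigma_A=\{x\in\Sigma^{\mathbb N}:A_{x_nx_{n+1}}=1\ \forall n\}$. A word is allowed if it occurs in some element of $\Sigma_A$; $C_w$ is the set of $x\in\Sigma_A$ beginning with $w$. $P$ is a row-stochastic matrix with $P_{ij}>0$ iff $A_{ij}=1$, $\mathbf p=(p_1,\dots,p_N)^T$ its stationary vector, $\mu=\mu_P$ the Markov measure $\mu(C_w)=p_{w_1}P_{w_1w_2}\cdots P_{w_{n-1}w_n}$. For a word $u$: $|u|$ is its length, $i(u)$ its first symbol, $t(u)$ its last symbol; $\chi_{a,b}=1$ if $a=b$ and $0$ otherwise; $\delta_u=P_{u_1u_2}\cdots P_{u_{\ell-1}u_\ell}$ for $u=u_1\cdots u_\ell$. Weighted correlation polynomial: for $u=u_1\cdots u_\ell$, $v=v_1\cdots v_m$ with $\ell,m\ge2$ and $0\le s\le\ell-1$, write $s\in(u,v)$ if $\ell-s\le m$ and $u_{s+1}\cdots u_\ell=v_1\cdots v_{\ell-s}$; $c_{s,u,v}=1$ if $s\in(u,v)$ and $0$ otherwise; $\delta_{s,u,v}=\prod_{j=\ell-s}^{m-1}P_{v_jv_{j+1}}$ (empty product $=1$). Then $\tau_{u,v}(z)=\sum_s c_{s,u,v}\delta_{s,u,v}z^{m+s-\ell}$, the sum over $0\le s\le\ell-1$ if $\ell<m$ and over $\ell-m\le s\le\ell-1$ if $\ell\ge m$. Finally $\tilde\tau_{v,u}(z)=\tau_{v,u}(z)-z^{|u|-1}c_{|v|-1,v,u}\delta_u$.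 *)

theory Defs
  imports Complex_Main "HOL-Library.Sublist" "HOL-Computational_Algebra.Formal_Power_Series"
begin

text \<open>Alphabet \<Sigma> = {1..N}; matrices are functions nat => nat => _, used on \<Sigma> only.
Words are lists; the word u_1...u_l is the list [u_1,...,u_l], so u_k = u ! (k-1).\<close>

definition alphabet :: "nat \<Rightarrow> nat set" where
  "alphabet N = {1..N}"

fun apow :: "nat \<Rightarrow> (nat \<Rightarrow> nat \<Rightarrow> nat) \<Rightarrow> nat \<Rightarrow> nat \<Rightarrow> nat \<Rightarrow> nat" where
  "apow N A 0 i j = (if i = j then 1 else 0)"
| "apow N A (Suc n) i j = (\<Sum>k\<in>alphabet N. apow N A n i k * A k j)"

definition irreducible_mat :: "nat \<Rightarrow> (nat \<Rightarrow> nat \<Rightarrow> nat) \<Rightarrow> bool" where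
  "irreducible_mat N A \<longleftrightarrow>
     (\<forall>i\<in>alphabet N. \<forall>j\<in>alphabet N. \<exists>n>0. apow N A n i j > 0)"

definition zero_one_mat :: "nat \<Rightarrow> (nat \<Rightarrow> nat \<Rightarrow> nat) \<Rightarrow> bool" where
  "zero_one_mat N A \<longleftrightarrow> (\<forall>i\<in>alphabet N. \<forall>j\<in>alphabet N. A i j \<in> {0, 1})"

definition SigmaA :: "nat \<Rightarrow> (nat \<Rightarrow> nat \<Rightarrow> nat) \<Rightarrow> (nat \<Rightarrow> nat) set" where
  "SigmaA N A = {x. (\<forall>n. x n \<in> alphabet N) \<and> (\<forall>n. A (x n) (x (Suc n)) = 1)}"

definition allowed :: "nat \<Rightarrow> (nat \<Rightarrow> nat \<Rightarrow> nat) \<Rightarrow> nat list \<Rightarrow> bool" where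
  "allowed N A w \<longleftrightarrow> (\<exists>x\<in>SigmaA N A. \<exists>k. w = map x [k..<k + length w])"

definition row_stochastic_compatible ::
  "nat \<Rightarrow> (nat \<Rightarrow> nat \<Rightarrow> nat) \<Rightarrow> (nat \<Rightarrow> nat \<Rightarrow> real) \<Rightarrow> bool" where
  "row_stochastic_compatible N A P \<longleftrightarrow>
     (\<forall>i\<in>alphabet N. \<forall>j\<in>alphabet N. P i j \<ge> 0 \<and> (P i j > 0 \<longleftrightarrow> A i j = 1)) \<and>
     (\<forall>i\<in>alphabet N. (\<Sum>j\<in>alphabet N. P i j) = 1)"

definition stationary :: "nat \<Rightarrow> (nat \<Rightarrow> nat \<Rightarrow> real) \<Rightarrow> (nat \<Rightarrow> real) \<Rightarrow> bool" where
  "stationary N P p \<longleftrightarrow>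
     (\<forall>i\<in>alphabet N. p i \<ge> 0) \<and> (\<Sum>i\<in>alphabet N. p i) = 1 \<and>
     (\<forall>j\<in>alphabet N. (\<Sum>i\<in>alphabet N. p i * P i j) = p j)"

definition delta :: "(nat \<Rightarrow> nat \<Rightarrow> real) \<Rightarrow> nat list \<Rightarrow> real" where
  "delta P u = (\<Prod>k\<in>{0..<length u - 1}. P (u ! k) (u ! (k + 1)))"

text \<open>Markov measure of the cylinder C_w: mu(C_w) = p_{w1} P_{w1 w2} ... P_{w(n-1) wn}.\<close>
definition markov_cyl :: "(nat \<Rightarrow> real) \<Rightarrow> (nat \<Rightarrow> nat \<Rightarrow> real) \<Rightarrow> nat list \<Rightarrow> real" where
  "markov_cyl p P w = p (hd w) * delta P w"

definition reduced :: "nat list set \<Rightarrow> bool" where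
  "reduced G \<longleftrightarrow> (\<forall>u\<in>G. \<forall>v\<in>G. u \<noteq> v \<longrightarrow> \<not> sublist u v)"

definition avoids :: "nat list set \<Rightarrow> nat list \<Rightarrow> bool" where
  "avoids G w \<longleftrightarrow> (\<forall>g\<in>G. \<not> sublist g w)"

definition mu_end :: "nat \<Rightarrow> (nat \<Rightarrow> nat \<Rightarrow> nat) \<Rightarrow> (nat \<Rightarrow> real) \<Rightarrow> (nat \<Rightarrow> nat \<Rightarrow> real)
    \<Rightarrow> nat list set \<Rightarrow> nat \<Rightarrow> nat \<Rightarrow> real" where
  "mu_end N A p P G n i =
     (\<Sum>w\<in>{w. length w = n \<and> set w \<subseteq> alphabet N \<and> allowed N A w \<and> w \<noteq> [] \<and> last w = i
              \<and> avoids G w}. markov_cyl p P w)"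

definition first_at_end :: "nat list set \<Rightarrow> nat list \<Rightarrow> nat list \<Rightarrow> bool" where
  "first_at_end G u w \<longleftrightarrow> suffix u w \<and> (\<forall>ps ss. w = ps @ u @ ss \<longrightarrow> ss = []) \<and>
     (\<forall>g\<in>G. g \<noteq> u \<longrightarrow> \<not> sublist g w)"

definition nu_end :: "nat \<Rightarrow> (nat \<Rightarrow> nat \<Rightarrow> nat) \<Rightarrow> (nat \<Rightarrow> real) \<Rightarrow> (nat \<Rightarrow> nat \<Rightarrow> real)
    \<Rightarrow> nat list set \<Rightarrow> nat \<Rightarrow> nat list \<Rightarrow> real" where
  "nu_end N A p P G n u =
     (\<Sum>w\<in>{w. length w = n \<and> set w \<subseteq> alphabet N \<and> allowed N A w \<and> first_at_end G u w}.
        markov_cyl p P w)"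

definition F_series :: "nat \<Rightarrow> (nat \<Rightarrow> nat \<Rightarrow> nat) \<Rightarrow> (nat \<Rightarrow> real) \<Rightarrow> (nat \<Rightarrow> nat \<Rightarrow> real)
    \<Rightarrow> nat list set \<Rightarrow> nat \<Rightarrow> real fps" where
  "F_series N A p P G i = Abs_fps (\<lambda>n. if n \<ge> 1 then mu_end N A p P G n i else 0)"

definition G_series :: "nat \<Rightarrow> (nat \<Rightarrow> nat \<Rightarrow> nat) \<Rightarrow> (nat \<Rightarrow> real) \<Rightarrow> (nat \<Rightarrow> nat \<Rightarrow> real)
    \<Rightarrow> nat list set \<Rightarrow> nat list \<Rightarrow> real fps" where
  "G_series N A p P G u = Abs_fps (\<lambda>n. if n \<ge> 1 then nu_end N A p P G n u else 0)"

definition corr_c :: "nat \<Rightarrow> nat list \<Rightarrow> nat list \<Rightarrow> real" where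
  "corr_c s u v = (if length u - s \<le> length v \<and> drop s u = take (length u - s) v then 1 else 0)"

text \<open>delta_{s,u,v} = prod_{j=l-s}^{m-1} P_{v_j v_{j+1}} (1-indexed: v_j = v ! (j-1)).\<close>
definition corr_delta :: "(nat \<Rightarrow> nat \<Rightarrow> real) \<Rightarrow> nat \<Rightarrow> nat list \<Rightarrow> nat list \<Rightarrow> real" where
  "corr_delta P s u v = (\<Prod>j\<in>{length u - s..length v - 1}. P (v ! (j - 1)) (v ! j))"

definition tau :: "(nat \<Rightarrow> nat \<Rightarrow> real) \<Rightarrow> nat list \<Rightarrow> nat list \<Rightarrow> real fps" where
  "tau P u v =
     (let l = length u; m = length v;
          S = (if l < m then {0..l - 1} else {l - m..l - 1})
      in (\<Sum>s\<in>S. fps_const (corr_c s u v * corr_delta P s u v) * fps_X ^ (m + s - l)))"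

definition tau_tilde :: "(nat \<Rightarrow> nat \<Rightarrow> real) \<Rightarrow> nat list \<Rightarrow> nat list \<Rightarrow> real fps" where
  "tau_tilde P v u =
     tau P v u - fps_X ^ (length u - 1) * fps_const (corr_c (length v - 1) v u * delta P u)"

end

theory Submission
  imports Defs
begin

unbundle fps_syntax


lemma shift_SigmaA: "x \<in> SigmaA N A \<Longrightarrow> (\<lambda>n. x (n + k)) \<in> SigmaA N A"
  by (simp add: SigmaA_def)

lemma allowed0: "allowed N A w \<longleftrightarrow> (\<exists>x\<in>SigmaA N A. \<forall>j<length w. w ! j = x j)"
proof
  assume "allowed N A w"
  then obtain x k where x: "x \<in> SigmaA N A" "w = map x [k..<k + length w]"
    unfolding allowed_def by auto
  have "\<forall>j<length w. w ! j = x (j + k)"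
  proof (intro allI impI)
    fix j assume "j < length w"
    have "w ! j = map x [k..<k + length w] ! j" using x(2) by (rule arg_cong[where f="\<lambda>l. l ! j"])
    then show "w ! j = x (j + k)" using \<open>j < length w\<close> by (simp add: add.commute)
  qed
  then show "\<exists>x\<in>SigmaA N A. \<forall>j<length w. w ! j = x j"
    using shift_SigmaA[OF x(1), of k] by (intro bexI[of _ "\<lambda>n. x (n + k)"]) auto
next
  assume "\<exists>x\<in>SigmaA N A. \<forall>j<length w. w ! j = x j"
  then obtain x where x: "x \<in> SigmaA N A" "\<forall>j<length w. w ! j = x j" by blast
  have "w = map x [0..<0 + length w]" by (rule nth_equalityI) (use x(2) in auto)
  then show "allowed N A w" unfolding allowed_def using x(1) by (intro bexI[of _ x] exI[of _ 0]) auto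
qed

lemma allowed_take: "allowed N A w \<Longrightarrow> allowed N A (take k w)"
  unfolding allowed0 by auto

lemma allowed_butlast: "allowed N A w \<Longrightarrow> allowed N A (butlast w)"
  by (simp add: butlast_conv_take allowed_take)

lemma allowed_set: "allowed N A w \<Longrightarrow> set w \<subseteq> alphabet N"
  unfolding allowed0 SigmaA_def by (auto simp: in_set_conv_nth)

lemma allowed_trans: "allowed N A w \<Longrightarrow> Suc j < length w \<Longrightarrow> A (w ! j) (w ! Suc j) = 1"
  unfolding allowed0 SigmaA_def by auto

lemma allowed_glue:
  assumes a: "allowed N A a" and b: "allowed N A b" and "a \<noteq> []" "b \<noteq> []" and l: "last a = hd b"
  shows "allowed N A (a @ tl b)"
proof -
  obtain x where x: "x \<in> SigmaA N A" "\<forall>j<length a. a ! j = x j" using a unfolding allowed0 by blast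
  obtain y where y: "y \<in> SigmaA N A" "\<forall>j<length b. b ! j = y j" using b unfolding allowed0 by blast
  have xy: "x (length a - 1) = y 0"
  proof -
    have "x (length a - 1) = a ! (length a - 1)" using x(2) \<open>a \<noteq> []\<close> by simp
    also have "\<dots> = last a" using \<open>a \<noteq> []\<close> by (simp add: last_conv_nth)
    also have "\<dots> = b ! 0" using l \<open>b \<noteq> []\<close> by (simp add: hd_conv_nth)
    also have "\<dots> = y 0" using y(2) \<open>b \<noteq> []\<close> by simp
    finally show ?thesis .
  qed
  define z where "z n = (if n < length a then x n else y (n + 1 - length a))" for n
  have "z \<in> SigmaA N A"
    unfolding SigmaA_def
  proof (intro CollectI conjI allI)
    fix n show "z n \<in> alphabet N" using x(1) y(1) by (simp add: z_def SigmaA_def)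
    show "A (z n) (z (Suc n)) = 1"
    proof (cases "Suc n < length a")
      case True then show ?thesis using x(1) by (simp add: z_def SigmaA_def)
    next
      case False
      show ?thesis
      proof (cases "n < length a")
        case True
        then have "n = length a - 1" using False by simp
        then have "Suc (Suc n) - length a = Suc 0" using True by simp
        then show ?thesis using y(1) xy False True \<open>n = length a - 1\<close>
          by (simp add: z_def SigmaA_def)
      next
        case False
        then have "Suc n + 1 - length a = Suc (n + 1 - length a)" by simp
        then show ?thesis using y(1) False by (simp add: z_def SigmaA_def)
      qed
    qed
  qed
  moreover have "\<forall>j<length (a @ tl b). (a @ tl b) ! j = z j"
  proof (intro allI impI)
    fix j assume j: "j < length (a @ tl b)"
    show "(a @ tl b) ! j = z j"
    proof (cases "j < length a")
      case True then show ?thesis using x(2) by (simp add: z_def nth_append)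
    next
      case False
      then have "(a @ tl b) ! j = b ! (j + 1 - length a)" using j \<open>b \<noteq> []\<close>
        by (simp add: nth_append nth_tl Suc_diff_le)
      moreover have "j + 1 - length a < length b" using j False by auto
      ultimately show ?thesis using False y(2) by (simp add: z_def)
    qed
  qed
  ultimately show ?thesis unfolding allowed0 by blast
qed

lemma apow_succ:
  assumes zo: "zero_one_mat N A" and i: "i \<in> alphabet N"
  shows "j \<in> alphabet N \<Longrightarrow> apow N A (Suc n) i j > 0 \<Longrightarrow> \<exists>k\<in>alphabet N. A i k = 1"
proof (induction n arbitrary: j)
  case 0
  then have "(\<Sum>k\<in>alphabet N. (if i = k then 1 else 0) * A k j) > 0" by simp
  then obtain k where "k \<in> alphabet N" "(if i = k then 1 else 0) * A k j > 0"
    by (metis (no_types, lifting) not_gr0 sum.neutral)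
  then have "A i j > 0" by (auto split: if_splits)
  then have "A i j = 1" using zo i 0 unfolding zero_one_mat_def by fastforce
  then show ?case using 0 by blast
next
  case (Suc n)
  then have "(\<Sum>k\<in>alphabet N. apow N A (Suc n) i k * A k j) > 0" by simp
  then obtain k where "k \<in> alphabet N" "apow N A (Suc n) i k * A k j > 0"
    by (metis (no_types, lifting) not_gr0 sum.neutral)
  then show ?case using Suc.IH by simp
qed

lemma exists_seq:
  assumes zo: "zero_one_mat N A" and irr: "irreducible_mat N A" and i: "i \<in> alphabet N"
  shows "\<exists>y\<in>SigmaA N A. y 0 = i"
proof -
  have succ: "\<exists>k\<in>alphabet N. A a k = 1" if a: "a \<in> alphabet N" for a
  proof -
    obtain n where "n > 0" "apow N A n a a > 0" using irr a unfolding irreducible_mat_def by blast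
    then obtain m where "n = Suc m" using gr0_implies_Suc by blast
    then show ?thesis using apow_succ[OF zo a a] \<open>apow N A n a a > 0\<close> by blast
  qed
  define s where "s a = (SOME k. k \<in> alphabet N \<and> A a k = 1)" for a
  have s: "s a \<in> alphabet N \<and> A a (s a) = 1" if "a \<in> alphabet N" for a
    unfolding s_def using succ[OF that] by (metis (mono_tags, lifting) someI_ex)
  define y where "y n = (s ^^ n) i" for n
  have yS: "y (Suc n) = s (y n)" for n by (simp add: y_def)
  have ya: "y n \<in> alphabet N" for n
  proof (induction n)
    case 0 then show ?case using i by (simp add: y_def)
  next
    case (Suc n) then show ?case using s[OF Suc] yS by simp
  qed
  have "A (y n) (y (Suc n)) = 1" for n using s[OF ya[of n]] yS by simp
  then have "y \<in> SigmaA N A" unfolding SigmaA_def using ya by blast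
  moreover have "y 0 = i" by (simp add: y_def)
  ultimately show ?thesis by blast
qed

lemma allowed_single:
  assumes "zero_one_mat N A" "irreducible_mat N A" "i \<in> alphabet N"
  shows "allowed N A [i]"
  using exists_seq[OF assms] unfolding allowed0 by auto

lemma allowed_pair:
  assumes "zero_one_mat N A" "irreducible_mat N A" "i \<in> alphabet N" "j \<in> alphabet N" "A j i = 1"
  shows "allowed N A [j, i]"
proof -
  obtain y where y: "y \<in> SigmaA N A" "y 0 = i" using exists_seq[OF assms(1-3)] by blast
  define z where "z n = (case n of 0 \<Rightarrow> j | Suc m \<Rightarrow> y m)" for n
  have "z \<in> SigmaA N A" using y assms(4,5) unfolding SigmaA_def
    by (auto simp: z_def split: nat.splits)
  moreover have "\<forall>k<2. [j,i] ! k = z k" using y by (auto simp: z_def less_2_cases_iff)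
  ultimately show ?thesis unfolding allowed0 by auto
qed

fun dl :: "(nat \<Rightarrow> nat \<Rightarrow> real) \<Rightarrow> nat list \<Rightarrow> real" where
  "dl P (a # b # r) = P a b * dl P (b # r)"
| "dl P _ = 1"

lemma delta_dl: "delta P w = dl P w"
proof (induction P w rule: dl.induct)
  case (1 P a b r)
  have "delta P (a # b # r) = (\<Prod>k\<in>{0..<Suc (length r)}. P ((a # b # r) ! k) ((a # b # r) ! (k + 1)))"
    by (simp add: delta_def)
  also have "\<dots> = P a b * (\<Prod>k\<in>{0..<length r}. P ((a # b # r) ! Suc k) ((a # b # r) ! (Suc k + 1)))"
    by (subst prod.atLeast0_lessThan_Suc_shift) (simp add: comp_def)
  also have "\<dots> = P a b * delta P (b # r)" by (simp add: delta_def)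
  finally show ?case using 1 by simp
qed (auto simp: delta_def)

lemma dl_glue: "a \<noteq> [] \<Longrightarrow> b \<noteq> [] \<Longrightarrow> last a = hd b \<Longrightarrow> dl P (a @ tl b) = dl P a * dl P b"
proof (induction a)
  case Nil then show ?case by simp
next
  case (Cons x a)
  show ?case
  proof (cases a)
    case Nil
    then have "x # tl b = b" using Cons.prems by (cases b) auto
    then show ?thesis using Nil by simp
  next
    case (Cons y r)
    then show ?thesis using Cons.IH Cons.prems by simp
  qed
qed

lemma cyl_glue: "a \<noteq> [] \<Longrightarrow> b \<noteq> [] \<Longrightarrow> last a = hd b \<Longrightarrow>
   markov_cyl p P (a @ tl b) = markov_cyl p P a * dl P b"
  by (simp add: markov_cyl_def delta_dl dl_glue)

lemma dl_drop_aux: "length u - 1 - i = d \<Longrightarrow> i < length u \<Longrightarrow>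
   dl P (drop i u) = (\<Prod>j\<in>{Suc i..length u - 1}. P (u ! (j - 1)) (u ! j))"
proof (induction d arbitrary: i)
  case 0
  then have i: "i = length u - 1" by simp
  have "drop i u = u ! i # drop (Suc i) u" by (rule Cons_nth_drop_Suc[symmetric]) (use 0 in simp)
  moreover have "drop (Suc i) u = []" using i 0 by simp
  ultimately show ?case using i by simp
next
  case (Suc d)
  then have lt: "Suc i < length u" by simp
  have d: "drop i u = u ! i # u ! Suc i # drop (Suc (Suc i)) u"
    using lt by (simp add: Cons_nth_drop_Suc)
  have d2: "drop (Suc i) u = u ! Suc i # drop (Suc (Suc i)) u"
    using lt by (simp add: Cons_nth_drop_Suc)
  have ih: "dl P (drop (Suc i) u) = (\<Prod>j\<in>{Suc (Suc i)..length u - 1}. P (u ! (j - 1)) (u ! j))"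
    using Suc.IH[of "Suc i"] Suc.prems lt by simp
  have "{Suc i..length u - 1} = insert (Suc i) {Suc (Suc i)..length u - 1}" using lt by auto
  then have "(\<Prod>j\<in>{Suc i..length u - 1}. P (u ! (j - 1)) (u ! j))
      = P (u ! i) (u ! Suc i) * (\<Prod>j\<in>{Suc (Suc i)..length u - 1}. P (u ! (j - 1)) (u ! j))"
    by simp
  then show ?case using d d2 ih by simp
qed

lemma dl_drop: "i < length u \<Longrightarrow> dl P (drop i u) = (\<Prod>j\<in>{Suc i..length u - 1}. P (u ! (j - 1)) (u ! j))"
  using dl_drop_aux by blast

lemma corr_delta_dl: "1 \<le> length v - s \<Longrightarrow> length v - s \<le> length u \<Longrightarrow>
    corr_delta P s v u = dl P (drop (length v - s - 1) u)"
proof -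
  assume a: "1 \<le> length v - s" "length v - s \<le> length u"
  then have e: "Suc (length v - s - 1) = length v - s" by simp
  have "length v - s - 1 < length u" using a by simp
  from dl_drop[OF this, of P] e show ?thesis unfolding corr_delta_def by simp
qed

lemma sub_butlast: "sublist g z \<Longrightarrow> suffix g z \<or> sublist g (butlast z)"
proof -
  assume "sublist g z"
  then obtain ps ss where z: "z = ps @ g @ ss" by (auto simp: sublist_def)
  show ?thesis
  proof (cases "ss = []")
    case True then show ?thesis using z by (auto simp: suffix_def)
  next
    case False
    then have "butlast z = ps @ g @ butlast ss" using z by (simp add: butlast_append)
    then show ?thesis by (metis sublist_appendI)
  qed
qed

lemma sub_butlast_occ: "z = ps @ g @ ss \<Longrightarrow> ss \<noteq> [] \<Longrightarrow> sublist g (butlast z)"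
  by (simp add: butlast_append)

lemma sublist_butlastD: "sublist g (butlast z) \<Longrightarrow> sublist g z"
proof -
  assume "sublist g (butlast z)"
  then obtain ps ss where "butlast z = ps @ g @ ss" by (auto simp: sublist_def)
  moreover have "z = butlast z @ drop (length z - 1) z"
    by (simp add: butlast_conv_take)
  ultimately have "z = ps @ g @ (ss @ drop (length z - 1) z)" by simp
  then show ?thesis unfolding sublist_def by blast
qed

lemma finite_words: "finite {w. length w = n \<and> set w \<subseteq> alphabet N}"
proof -
  have "finite (alphabet N)" unfolding alphabet_def by blast
  from finite_lists_length_eq[OF this, of n]
  show ?thesis by (metis (no_types, lifting) Collect_cong)
qed




definition MuS :: "nat \<Rightarrow> (nat \<Rightarrow> nat \<Rightarrow> nat) \<Rightarrow> nat list set \<Rightarrow> nat \<Rightarrow> nat \<Rightarrow> nat list set" where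
  "MuS N A G n i = {w. length w = n \<and> set w \<subseteq> alphabet N \<and> allowed N A w \<and> w \<noteq> [] \<and> last w = i
              \<and> avoids G w}"

definition NuS :: "nat \<Rightarrow> (nat \<Rightarrow> nat \<Rightarrow> nat) \<Rightarrow> nat list set \<Rightarrow> nat \<Rightarrow> nat list \<Rightarrow> nat list set" where
  "NuS N A G n u = {w. length w = n \<and> set w \<subseteq> alphabet N \<and> allowed N A w \<and> first_at_end G u w}"

definition YS :: "nat \<Rightarrow> (nat \<Rightarrow> nat \<Rightarrow> nat) \<Rightarrow> nat list set \<Rightarrow> nat \<Rightarrow> nat \<Rightarrow> nat list set" where
  "YS N A G m i = {y. length y = Suc m \<and> set y \<subseteq> alphabet N \<and> allowed N A y \<and> last y = i
              \<and> avoids G (butlast y)}"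

lemma mu_S: "mu_end N A p P G n i = sum (markov_cyl p P) (MuS N A G n i)"
  unfolding mu_end_def MuS_def by simp

lemma nu_S: "nu_end N A p P G n u = sum (markov_cyl p P) (NuS N A G n u)"
  unfolding nu_end_def NuS_def by simp

lemma finite_MuS: "finite (MuS N A G n i)"
  by (rule finite_subset[OF _ finite_words[of n N]]) (auto simp: MuS_def)

lemma finite_NuS: "finite (NuS N A G n u)"
  by (rule finite_subset[OF _ finite_words[of n N]]) (auto simp: NuS_def)

lemma finite_YS: "finite (YS N A G m i)"
  by (rule finite_subset[OF _ finite_words[of "Suc m" N]]) (auto simp: YS_def)

lemma F_nth: "F_series N A p P G i $ n = mu_end N A p P G n i"
proof (cases "n = 0")
  case True
  have "MuS N A G 0 i = {}" unfolding MuS_def by auto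
  then show ?thesis using True by (simp add: F_series_def mu_S)
qed (simp add: F_series_def)

lemma fae_suffix: "first_at_end G u w \<Longrightarrow> suffix u w"
  unfolding first_at_end_def by blast
lemma fae_occ: "first_at_end G u w \<Longrightarrow> w = ps @ u @ ss \<Longrightarrow> ss = []"
  unfolding first_at_end_def by blast
lemma fae_other: "first_at_end G u w \<Longrightarrow> g \<in> G \<Longrightarrow> g \<noteq> u \<Longrightarrow> \<not> sublist g w"
  unfolding first_at_end_def by blast
lemma fae_intro: "suffix u w \<Longrightarrow> (\<And>ps ss. w = ps @ u @ ss \<Longrightarrow> ss = []) \<Longrightarrow>
   (\<And>g. g \<in> G \<Longrightarrow> g \<noteq> u \<Longrightarrow> \<not> sublist g w) \<Longrightarrow> first_at_end G u w"
  unfolding first_at_end_def by blast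

lemma NuS_0: "v \<noteq> [] \<Longrightarrow> NuS N A G 0 v = {}"
proof -
  assume v: "v \<noteq> []"
  { fix x assume "x \<in> NuS N A G 0 v"
    then have "length x = 0 \<and> first_at_end G v x" unfolding NuS_def by blast
    then have "x = []" "suffix v x" using fae_suffix[of G v x] by auto
    then have False using v by simp }
  then show ?thesis by blast
qed

lemma G_nth: "v \<noteq> [] \<Longrightarrow> G_series N A p P G v $ n = nu_end N A p P G n v"
proof (cases "n = 0")
  case True
  assume "v \<noteq> []"
  then show ?thesis using True NuS_0[of v N A G] by (simp add: G_series_def nu_S)
qed (simp add: G_series_def)

context
  fixes N :: nat and A :: "nat \<Rightarrow> nat \<Rightarrow> nat" and P :: "nat \<Rightarrow> nat \<Rightarrow> real"
    and p :: "nat \<Rightarrow> real" and G :: "nat list set"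
  assumes zo: "zero_one_mat N A" and irr: "irreducible_mat N A"
    and rs: "row_stochastic_compatible N A P"
    and fin: "finite G" and Gw: "\<forall>w\<in>G. w \<noteq> [] \<and> allowed N A w" and red: "reduced G"
begin

lemma P_zero: "i \<in> alphabet N \<Longrightarrow> j \<in> alphabet N \<Longrightarrow> A j i \<noteq> 1 \<Longrightarrow> P j i = 0"
  using rs unfolding row_stochastic_compatible_def by force

lemma eq1_right:
  assumes m: "1 \<le> m" and i: "i \<in> alphabet N"
  shows "sum (markov_cyl p P) (YS N A G m i)
       = (\<Sum>j\<in>alphabet N - {a. [a] \<in> G}. mu_end N A p P G m j * P j i)"
proof -
  define B where "B = {w. length w = m \<and> set w \<subseteq> alphabet N \<and> allowed N A w \<and> avoids G w \<and> A (last w) i = 1}"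
  define Av where "Av = {w. length w = m \<and> set w \<subseteq> alphabet N \<and> allowed N A w \<and> avoids G w}"
  have finAv: "finite Av" by (rule finite_subset[OF _ finite_words[of m N]]) (auto simp: Av_def)
  have BAv: "B \<subseteq> Av" by (auto simp: B_def Av_def)
  have inj: "inj_on (\<lambda>w. w @ [i]) B" by (auto simp: inj_on_def)
  have img: "YS N A G m i = (\<lambda>w. w @ [i]) ` B"
  proof
    show "YS N A G m i \<subseteq> (\<lambda>w. w @ [i]) ` B"
    proof
      fix y assume y: "y \<in> YS N A G m i"
      then have yp: "length y = Suc m \<and> set y \<subseteq> alphabet N \<and> allowed N A y \<and> last y = i
              \<and> avoids G (butlast y)" unfolding YS_def by blast
      then have yne: "y \<noteq> []" by auto
      have "y = butlast y @ [last y]" using yne by simp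
      then have yeq: "y = butlast y @ [i]" using yp by simp
      define bw where "bw = butlast y"
      have yeq: "y = bw @ [i]" using yeq unfolding bw_def .
      have lb: "length bw = m" using y yeq by (simp add: YS_def)
      have "A ((bw @ [i]) ! (m - 1)) ((bw @ [i]) ! Suc (m - 1)) = 1"
        using allowed_trans[of N A "bw @ [i]" "m - 1"] y yeq m lb by (simp add: YS_def)
      moreover have "(bw @ [i]) ! (m - 1) = last bw"
        using lb m by (cases "bw = []") (auto simp: nth_append last_conv_nth)
      moreover have "(bw @ [i]) ! Suc (m - 1) = i"
        using lb m by (simp add: nth_append)
      ultimately have "A (last bw) i = 1" by simp
      moreover have "set bw \<subseteq> alphabet N" using y yeq by (auto simp: YS_def)
      moreover have "allowed N A bw" using y yeq allowed_butlast[of N A y] by (simp add: YS_def)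
      ultimately have "bw \<in> B" using y yeq lb by (auto simp: YS_def B_def)
      then show "y \<in> (\<lambda>w. w @ [i]) ` B" using yeq by (intro image_eqI)
    qed
  next
    show "(\<lambda>w. w @ [i]) ` B \<subseteq> YS N A G m i"
    proof
      fix y assume "y \<in> (\<lambda>w. w @ [i]) ` B"
      then obtain w where w: "w \<in> B" "y = w @ [i]" by blast
      then have wne: "w \<noteq> []" using m by (auto simp: B_def)
      then have lw: "last w \<in> alphabet N" using w by (auto simp: B_def)
      have "allowed N A [last w, i]" using allowed_pair[OF zo irr i lw] w by (simp add: B_def)
      then have "allowed N A (w @ tl [last w, i])"
        using allowed_glue[of N A w "[last w, i]"] w wne by (simp add: B_def)
      then show "y \<in> YS N A G m i" using w i by (auto simp: B_def YS_def)
    qed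
  qed
  have "sum (markov_cyl p P) (YS N A G m i) = (\<Sum>w\<in>B. markov_cyl p P (w @ [i]))"
    unfolding img by (rule sum.reindex[OF inj, unfolded comp_def])
  also have "\<dots> = (\<Sum>w\<in>B. markov_cyl p P w * P (last w) i)"
  proof (rule sum.cong[OF refl])
    fix w assume "w \<in> B"
    then have "w \<noteq> []" using m by (auto simp: B_def)
    then show "markov_cyl p P (w @ [i]) = markov_cyl p P w * P (last w) i"
      using cyl_glue[of w "[last w, i]" p P] by simp
  qed
  also have "\<dots> = (\<Sum>w\<in>Av. markov_cyl p P w * P (last w) i)"
  proof (rule sum.mono_neutral_left[OF finAv BAv], rule ballI)
    fix w assume w: "w \<in> Av - B"
    then have "w \<noteq> []" using m by (auto simp: Av_def)
    then have "last w \<in> alphabet N" using w by (auto simp: Av_def)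
    then have "P (last w) i = 0" using P_zero[OF i] w by (auto simp: Av_def B_def)
    then show "markov_cyl p P w * P (last w) i = 0" by simp
  qed
  also have "\<dots> = (\<Sum>j\<in>alphabet N - {a. [a] \<in> G}. \<Sum>w\<in>{w. w \<in> Av \<and> last w = j}. markov_cyl p P w * P (last w) i)"
  proof (rule sum.group[symmetric, OF finAv])
    show "finite (alphabet N - {a. [a] \<in> G})" by (simp add: alphabet_def)
    show "last ` Av \<subseteq> alphabet N - {a. [a] \<in> G}"
    proof
      fix j assume "j \<in> last ` Av"
      then obtain w where w: "w \<in> Av" "j = last w" by blast
      then have wne: "w \<noteq> []" using m by (auto simp: Av_def)
      then have "j \<in> alphabet N" using w by (auto simp: Av_def)
      moreover have "suffix [j] w" using w wne
        by (metis append_butlast_last_id suffixI)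
      then have "[j] \<notin> G" using w by (auto simp: Av_def avoids_def)
      ultimately show "j \<in> alphabet N - {a. [a] \<in> G}" by simp
    qed
  qed
  also have "\<dots> = (\<Sum>j\<in>alphabet N - {a. [a] \<in> G}. mu_end N A p P G m j * P j i)"
  proof (rule sum.cong[OF refl])
    fix j
    have "{w. w \<in> Av \<and> last w = j} = MuS N A G m j"
      using m by (auto simp: Av_def MuS_def)
    then show "(\<Sum>w\<in>{w. w \<in> Av \<and> last w = j}. markov_cyl p P w * P (last w) i)
        = mu_end N A p P G m j * P j i"
      by (simp add: mu_S sum_distrib_right MuS_def)
  qed
  finally show ?thesis .
qed

lemma red_sub: "u \<in> G \<Longrightarrow> v \<in> G \<Longrightarrow> sublist u v \<Longrightarrow> u = v"
  using red unfolding reduced_def by blast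

lemma suffix_last: "suffix g y \<Longrightarrow> g \<noteq> [] \<Longrightarrow> last g = last y"
  by (auto simp: suffix_def)

lemma two_suffixes: "g \<in> G \<Longrightarrow> g' \<in> G \<Longrightarrow> suffix g y \<Longrightarrow> suffix g' y \<Longrightarrow> g = g'"
proof -
  assume a: "g \<in> G" "g' \<in> G" "suffix g y" "suffix g' y"
  from suffix_same_cases[OF a(3,4)] have "sublist g g' \<or> sublist g' g" by auto
  then show "g = g'" using red_sub a(1,2) by auto
qed

lemma eq1_left:
  assumes m: "1 \<le> m" and i: "i \<in> alphabet N" and iG: "[i] \<notin> G"
  shows "sum (markov_cyl p P) (YS N A G m i)
       = mu_end N A p P G (Suc m) i
         + (\<Sum>v\<in>{v\<in>G. length v \<ge> 2}. if i = last v then nu_end N A p P G (Suc m) v else 0)"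
proof -
  define G2i where "G2i = {v\<in>{v\<in>G. length v \<ge> 2}. i = last v}"
  define U where "U = (\<Union>v\<in>G2i. NuS N A G (Suc m) v)"
  have finG2i: "finite G2i" using fin unfolding G2i_def by simp
  have s1: "(\<Sum>v\<in>{v\<in>G. length v \<ge> 2}. if i = last v then nu_end N A p P G (Suc m) v else 0)
      = (\<Sum>v\<in>G2i. nu_end N A p P G (Suc m) v)"
    unfolding G2i_def by (rule sum.inter_filter[symmetric]) (use fin in simp)
  have disj: "\<forall>v\<in>G2i. \<forall>v'\<in>G2i. v \<noteq> v' \<longrightarrow> NuS N A G (Suc m) v \<inter> NuS N A G (Suc m) v' = {}"
  proof (intro ballI impI)
    fix v v' assume v: "v \<in> G2i" "v' \<in> G2i" "v \<noteq> v'"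
    show "NuS N A G (Suc m) v \<inter> NuS N A G (Suc m) v' = {}"
    proof (rule ccontr)
      assume "NuS N A G (Suc m) v \<inter> NuS N A G (Suc m) v' \<noteq> {}"
      then obtain y where "first_at_end G v y" "first_at_end G v' y" unfolding NuS_def by blast
      then have "suffix v' y" "\<not> sublist v' y" using fae_suffix fae_other v unfolding G2i_def by blast+
      then show False by auto
    qed
  qed
  have s2: "(\<Sum>v\<in>G2i. nu_end N A p P G (Suc m) v) = sum (markov_cyl p P) U"
    unfolding U_def nu_S by (rule sum.UNION_disjoint[symmetric]) (use finG2i disj finite_NuS in auto)
  have YU: "YS N A G m i = MuS N A G (Suc m) i \<union> U"
  proof
    show "YS N A G m i \<subseteq> MuS N A G (Suc m) i \<union> U"
    proof
      fix y assume "y \<in> YS N A G m i"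
      then have yp: "length y = Suc m" "set y \<subseteq> alphabet N" "allowed N A y" "last y = i"
          "avoids G (butlast y)" unfolding YS_def by blast+
      then have yne: "y \<noteq> []" by auto
      show "y \<in> MuS N A G (Suc m) i \<union> U"
      proof (cases "avoids G y")
        case True
        then have "y \<in> MuS N A G (Suc m) i" unfolding MuS_def using yp yne by blast
        then show ?thesis by blast
      next
        case False
        then obtain g where g: "g \<in> G" "sublist g y" unfolding avoids_def by blast
        have nb: "\<not> sublist h (butlast y)" if "h \<in> G" for h using yp(5) that unfolding avoids_def by blast
        have gs: "suffix g y" using sub_butlast[OF g(2)] nb[OF g(1)] by blast
        have gne: "g \<noteq> []" using Gw g(1) by blast
        have lg: "last g = i" using suffix_last[OF gs gne] yp(4) by simp
        have "length g \<noteq> 1"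
        proof
          assume "length g = 1"
          then have "g = [last g]" by (cases g) auto
          then show False using iG g(1) lg by simp
        qed
        moreover have "length g \<noteq> 0" using gne by simp
        ultimately have g2: "length g \<ge> 2" by linarith
        have "first_at_end G g y"
        proof (rule fae_intro[OF gs])
          fix ps ss assume "y = ps @ g @ ss"
          then show "ss = []" using sub_butlast_occ nb[OF g(1)] by blast
        next
          fix h assume h: "h \<in> G" "h \<noteq> g"
          show "\<not> sublist h y"
          proof
            assume "sublist h y"
            then have "suffix h y" using sub_butlast nb[OF h(1)] by blast
            then show False using two_suffixes[OF h(1) g(1) _ gs] h(2) by blast
          qed
        qed
        then have "y \<in> NuS N A G (Suc m) g" unfolding NuS_def using yp by blast
        moreover have "g \<in> G2i" unfolding G2i_def using g(1) g2 lg by simp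
        ultimately show ?thesis unfolding U_def by blast
      qed
    qed
  next
    show "MuS N A G (Suc m) i \<union> U \<subseteq> YS N A G m i"
    proof
      fix y assume "y \<in> MuS N A G (Suc m) i \<union> U"
      then consider "y \<in> MuS N A G (Suc m) i" | v where "v \<in> G2i" "y \<in> NuS N A G (Suc m) v"
        unfolding U_def by blast
      then show "y \<in> YS N A G m i"
      proof cases
        case 1
        then have yp: "length y = Suc m" "set y \<subseteq> alphabet N" "allowed N A y" "last y = i"
            "avoids G y" unfolding MuS_def by blast+
        have "avoids G (butlast y)" using yp(5) sublist_butlastD unfolding avoids_def by blast
        then show ?thesis unfolding YS_def using yp by blast
      next
        case 2
        then have yp: "length y = Suc m" "set y \<subseteq> alphabet N" "allowed N A y" "first_at_end G v y"
          unfolding NuS_def by blast+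
        have v: "v \<in> G" "length v \<ge> 2" "i = last v" using 2(1) unfolding G2i_def by auto
        have vne: "v \<noteq> []" using v(2) by auto
        have yne: "y \<noteq> []" using yp(1) by auto
        have ly: "last y = i" using suffix_last[OF fae_suffix[OF yp(4)] vne] v(3) by simp
        have "avoids G (butlast y)" unfolding avoids_def
        proof (intro ballI notI)
          fix g assume g: "g \<in> G" "sublist g (butlast y)"
          show False
          proof (cases "g = v")
            case True
            then obtain ps ss where "butlast y = ps @ v @ ss" using g(2) unfolding sublist_def by blast
            then have "y = ps @ v @ (ss @ [last y])" using yne by (metis append_assoc append_butlast_last_id)
            from fae_occ[OF yp(4) this] show False by simp
          next
            case False
            then show False using fae_other[OF yp(4) g(1)] sublist_butlastD[OF g(2)] by blast
          qed
        qed
        then show ?thesis unfolding YS_def using yp ly by blast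
      qed
    qed
  qed
  have disj2: "MuS N A G (Suc m) i \<inter> U = {}"
  proof (rule ccontr)
    assume "MuS N A G (Suc m) i \<inter> U \<noteq> {}"
    then obtain y v where "avoids G y" "v \<in> G2i" "first_at_end G v y"
      unfolding MuS_def U_def NuS_def by blast
    then show False using fae_suffix unfolding avoids_def G2i_def by auto
  qed
  have finU: "finite U" unfolding U_def using finG2i finite_NuS by blast
  have "sum (markov_cyl p P) (YS N A G m i) = mu_end N A p P G (Suc m) i + sum (markov_cyl p P) U"
    unfolding YU mu_S by (rule sum.union_disjoint[OF finite_MuS finU disj2])
  then show ?thesis using s1 s2 by simp
qed

end



lemma take_len_plus: "take (length p + j) (p @ q) = p @ take j q"
  by simp

lemma decomp:
  assumes sv: "suffix v x" and s: "s < length v" and dv: "drop s v = take k u"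
    and k: "k = length v - s" "1 \<le> k" "k \<le> length u"
  shows "\<exists>x1. x = x1 @ take k u \<and> x @ drop k u = x1 @ u \<and> take (length x - k + 1) x = x1 @ [hd u]"
proof -
  obtain x0 where x0: "x = x0 @ v" using sv unfolding suffix_def by blast
  have "v = take s v @ take k u" using dv by (metis append_take_drop_id)
  then have x1: "x = (x0 @ take s v) @ take k u" using x0 by simp
  have lk: "length (take k u) = k" using k by simp
  have len: "length x - k + 1 = length (x0 @ take s v) + 1" using x1 lk by simp
  have "take (length x - k + 1) x = take (length (x0 @ take s v) + 1) ((x0 @ take s v) @ take k u)"
    using len x1 by metis
  also have "\<dots> = (x0 @ take s v) @ take 1 (take k u)" by (rule take_len_plus)
  finally have "take (length x - k + 1) x = (x0 @ take s v) @ take 1 (take k u)" .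
  also have "take 1 (take k u) = [hd u]" using k
    by (cases u) auto
  finally have t: "take (length x - k + 1) x = (x0 @ take s v) @ [hd u]" .
  have "x @ drop k u = (x0 @ take s v) @ u" using x1 by simp
  then show ?thesis using x1 t by blast
qed

lemma prefix_fae:
  assumes e: "x @ r = x' @ r'" and l: "length x \<le> length x'"
    and f: "first_at_end G v x" "first_at_end G v' x'" and vG: "v \<in> G"
  shows "x = x' \<and> v = v'"
proof -
  obtain d where d: "x' = x @ d" using e l
    by (metis append_eq_append_conv_if append_take_drop_id take_all_iff)
  obtain x0 where x0: "x = x0 @ v" using fae_suffix[OF f(1)] unfolding suffix_def by blast
  have x': "x' = x0 @ v @ d" using d x0 by simp
  have "sublist v x'" using x' by auto
  then have vv: "v = v'" using fae_other[OF f(2) vG] by blast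
  then have "d = []" using fae_occ[OF f(2), of x0 d] x' by simp
  then show ?thesis using d vv by simp
qed

definition Sp :: "nat list \<Rightarrow> nat list \<Rightarrow> nat set" where
  "Sp v u = (if length v < length u then {0..length v - 1} else {length v - length u..length v - 1})
            - {length v - 1}"

definition ee :: "nat list \<Rightarrow> nat list \<Rightarrow> nat \<Rightarrow> nat" where
  "ee u v s = length u + s - length v"

definition XS where
  "XS N A G u n v s = {x. ee u v s \<le> n \<and> corr_c s v u = 1 \<and> x \<in> NuS N A G (n - ee u v s) v}"

definition TS where
  "TS N A G u n = (SIGMA v:{v\<in>G. length v \<ge> 2}. SIGMA s:Sp v u. XS N A G u n v s)"

definition psi :: "nat list \<Rightarrow> nat \<Rightarrow> nat list \<times> nat \<times> nat list \<Rightarrow> nat list" where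
  "psi u n t = take (n + 1 - length u) (snd (snd t))"

lemma corr_c_1: "corr_c s v u = 1 \<longleftrightarrow> length v - s \<le> length u \<and> drop s v = take (length v - s) u"
  unfolding corr_c_def by simp

lemma Sp_iff: "s \<in> Sp v u \<longleftrightarrow> s < length v - 1 \<and> (length v \<ge> length u \<longrightarrow> length v - length u \<le> s)"
  unfolding Sp_def by auto

lemma TS_props:
  assumes "(v, s, x) \<in> TS N A G u n"
  shows "v \<in> G" "length v \<ge> 2" "s < length v - 1" "length v - s \<le> length u"
    "drop s v = take (length v - s) u" "ee u v s \<le> n" "length x = n - ee u v s"
    "set x \<subseteq> alphabet N" "allowed N A x" "first_at_end G v x"
proof -
  have a: "v \<in> G" "length v \<ge> 2" "s \<in> Sp v u" "x \<in> XS N A G u n v s"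
    using assms unfolding TS_def by auto
  then have b: "ee u v s \<le> n" "corr_c s v u = 1" "x \<in> NuS N A G (n - ee u v s) v"
    unfolding XS_def by auto
  show "v \<in> G" "length v \<ge> 2" using a by auto
  show "s < length v - 1" using a(3) Sp_iff by blast
  show "length v - s \<le> length u" "drop s v = take (length v - s) u" using b(2) corr_c_1 by blast+
  show "ee u v s \<le> n" using b by simp
  show "length x = n - ee u v s" "set x \<subseteq> alphabet N" "allowed N A x" "first_at_end G v x"
    using b(3) unfolding NuS_def by blast+
qed

lemma tl_drop_Suc: "tl (drop j u) = drop (Suc j) u"
  by (simp add: drop_Suc tl_drop)

context
  fixes N :: nat and A :: "nat \<Rightarrow> nat \<Rightarrow> nat" and P :: "nat \<Rightarrow> nat \<Rightarrow> real"
    and p :: "nat \<Rightarrow> real" and G :: "nat list set"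
  assumes zo: "zero_one_mat N A" and irr: "irreducible_mat N A"
    and rs: "row_stochastic_compatible N A P"
    and fin: "finite G" and Gw: "\<forall>w\<in>G. w \<noteq> [] \<and> allowed N A w" and red: "reduced G"
begin

lemmas two_suf = two_suffixes[OF zo irr rs fin Gw red]

lemma psi_props:
  assumes t: "(v, s, x) \<in> TS N A G u n" and u: "u \<in> G" "length u \<ge> 2"
  shows "psi u n (v, s, x) \<in> MuS N A G (n + 1 - length u) (hd u)"
    "corr_delta P s v u * markov_cyl p P x = delta P u * markov_cyl p P (psi u n (v, s, x))"
    "x @ drop (length v - s) u = psi u n (v, s, x) @ tl u"
proof -
  note tp = TS_props[OF t]
  define k where "k = length v - s"
  have k2: "2 \<le> k" "k \<le> length u" "k \<le> length v" using tp(3,4) unfolding k_def by auto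
  have sv: "s < length v" using tp(3) by simp
  have vsuf: "suffix v x" using fae_suffix[OF tp(10)] .
  have lx: "length x \<ge> length v" using suffix_length_le[OF vsuf] .
  have eek: "ee u v s = length u - k" unfolding ee_def k_def using tp(4) sv by simp
  have nu: "n \<ge> length u" using tp(6,7) lx k2 eek by linarith
  have lxk: "length x - k + 1 = n + 1 - length u" using tp(7) eek nu k2 by linarith
  obtain x1 where x1: "x = x1 @ take k u" "x @ drop k u = x1 @ u" "take (length x - k + 1) x = x1 @ [hd u]"
    using decomp[OF vsuf sv tp(5)[folded k_def] k_def] k2 by auto
  have ps: "psi u n (v, s, x) = x1 @ [hd u]" unfolding psi_def using x1(3) lxk by simp
  have une: "u \<noteq> []" using u by auto
  have tkn: "take k u \<noteq> []" using k2 une by simp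
  obtain a r where ar: "take k u = a # r" using tkn by (cases "take k u") auto
  have "hd (take k u) = hd u" using k2 by (simp add: hd_take)
  then have a: "a = hd u" using ar by simp
  have "length (take k u) = k" using k2 by (simp add: min_absorb2)
  then have "length r = k - 1" using ar by simp
  then have rne: "r \<noteq> []" using k2 by auto
  have tr: "tl (take k u) = r" using ar by simp
  have tk: "take k u = [hd u] @ tl (take k u)" using ar a tr by simp
  have tkne: "tl (take k u) \<noteq> []" using tr rne by simp
  have xsplit: "x = (x1 @ [hd u]) @ tl (take k u)" using x1(1) tk by simp
  have une': "u \<noteq> []" using u by auto
  show "x @ drop (length v - s) u = psi u n (v, s, x) @ tl u"
    using x1(2) ps une' unfolding k_def[symmetric] by (cases u) auto
  show "psi u n (v, s, x) \<in> MuS N A G (n + 1 - length u) (hd u)"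
  proof -
    have l: "length (psi u n (v, s, x)) = n + 1 - length u"
      using ps xsplit lxk x1(1) k2 by simp
    have st: "set (psi u n (v, s, x)) \<subseteq> alphabet N"
      using tp(8) unfolding psi_def by (auto dest: in_set_takeD)
    have al: "allowed N A (psi u n (v, s, x))"
      unfolding psi_def using allowed_take[OF tp(9)] by simp
    have av: "avoids G (psi u n (v, s, x))" unfolding avoids_def ps
    proof (intro ballI notI)
      fix g assume g: "g \<in> G" "sublist g (x1 @ [hd u])"
      show False
      proof (cases "g = v")
        case True
        then obtain ps ss where "x1 @ [hd u] = ps @ v @ ss" using g(2) unfolding sublist_def by blast
        then have "x = ps @ v @ (ss @ tl (take k u))" using xsplit by simp
        from fae_occ[OF tp(10) this] tkne show False by simp
      next
        case False
        have "sublist g x" using g(2) xsplit by (metis sublist_append_rightI sublist_order.order_trans)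
        then show False using fae_other[OF tp(10) g(1) False] by blast
      qed
    qed
    show ?thesis unfolding MuS_def using l st al av ps by simp
  qed
  have cd: "corr_delta P s v u = dl P (drop (k - 1) u)"
    using corr_delta_dl[of v s u P] k2 unfolding k_def by simp
  have xne: "x \<noteq> []" using xsplit by simp
  have dne: "drop (k - 1) u \<noteq> []" using k2 by simp
  have lastx: "last x = hd (drop (k - 1) u)"
  proof -
    have "last x = last (take k u)" using x1(1) k2 by (simp add: une)
    also have "\<dots> = u ! (k - 1)" using k2 tkn by (simp add: last_conv_nth min_absorb2)
    also have "\<dots> = hd (drop (k - 1) u)" using k2 by (simp add: hd_drop_conv_nth)
    finally show ?thesis .
  qed
  have tld: "tl (drop (k - 1) u) = drop k u" using tl_drop_Suc[of "k - 1" u] k2 by simp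
  have "corr_delta P s v u * markov_cyl p P x = markov_cyl p P (x @ drop k u)"
    using cyl_glue[OF xne dne lastx, of p P] cd tld by simp
  also have "\<dots> = markov_cyl p P ((x1 @ [hd u]) @ tl u)" using x1(2) une by (cases u) auto
  also have "\<dots> = markov_cyl p P (x1 @ [hd u]) * dl P u"
    by (rule cyl_glue) (use une in auto)
  finally show "corr_delta P s v u * markov_cyl p P x = delta P u * markov_cyl p P (psi u n (v, s, x))"
    using ps by (simp add: delta_dl)
qed


lemma psi_inj:
  assumes u: "u \<in> G" "length u \<ge> 2"
  shows "inj_on (psi u n) (TS N A G u n)"
proof (rule inj_onI)
  fix t t' assume t: "t \<in> TS N A G u n" and t': "t' \<in> TS N A G u n" and eq: "psi u n t = psi u n t'"
  obtain v s x where tv: "t = (v, s, x)" by (cases t) auto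
  obtain v' s' x' where tv': "t' = (v', s', x')" by (cases t') auto
  note tp = TS_props[OF t[unfolded tv]]
  note tp' = TS_props[OF t'[unfolded tv']]
  have e: "x @ drop (length v - s) u = x' @ drop (length v' - s') u"
    using psi_props(3)[OF t[unfolded tv] u] psi_props(3)[OF t'[unfolded tv'] u] eq tv tv' by simp
  have xv: "x = x' \<and> v = v'"
  proof (cases "length x \<le> length x'")
    case True
    then show ?thesis using prefix_fae[OF e True tp(10) tp'(10) tp(1)] by simp
  next
    case False
    then show ?thesis using prefix_fae[OF e[symmetric] _ tp'(10) tp(10) tp'(1)] by simp
  qed
  then have "ee u v s = ee u v s'" using tp(6,7) tp'(6,7) by simp
  then have "s = s'" using tp(4) tp'(4) xv unfolding ee_def by simp
  then show "t = t'" using tv tv' xv by simp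
qed

lemma psi_surj:
  assumes u: "u \<in> G" "length u \<ge> 2" and w: "w \<in> MuS N A G (n + 1 - length u) (hd u)"
  shows "w \<in> psi u n ` TS N A G u n"
proof -
  define m where "m = n + 1 - length u"
  have wp: "length w = m" "set w \<subseteq> alphabet N" "allowed N A w" "w \<noteq> []" "last w = hd u" "avoids G w"
    using w unfolding MuS_def m_def by blast+
  have m1: "m \<ge> 1" using wp(1,4) by (cases w) auto
  have nu: "n \<ge> length u" using m1 unfolding m_def by simp
  have une: "u \<noteq> []" using u by auto
  have ua: "allowed N A u" using Gw u by blast
  define y where "y = w @ tl u"
  have "length y = length w + (length u - 1)" unfolding y_def by simp
  then have ly: "length y = n" using wp(1) nu une unfolding m_def by (cases u) auto
  have ya: "allowed N A y" unfolding y_def using allowed_glue[OF wp(3) ua wp(4) une wp(5)] .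
  have yset: "set y \<subseteq> alphabet N" using allowed_set[OF ya] .
  define w' where "w' = butlast w"
  have w'w: "w = w' @ [hd u]" using wp(4,5) unfolding w'_def by (metis append_butlast_last_id)
  have lw': "length w' = m - 1" using wp(1) unfolding w'_def by simp
  have yw'u: "y = w' @ u" unfolding y_def using w'w une by (cases u) auto
  define Q where "Q l \<longleftrightarrow> (\<exists>g\<in>G. sublist g (take l y))" for l
  have Qn: "Q n" unfolding Q_def using ly u(1) yw'u by auto
  define L where "L = (LEAST l. Q l)"
  have QL: "Q L" unfolding L_def by (rule LeastI[of Q, OF Qn])
  have Ln: "L \<le> n" unfolding L_def by (rule Least_le[of Q, OF Qn])
  have nQ: "\<not> Q l" if "l < L" for l using not_less_Least[of l Q] that unfolding L_def by blast
  have nQm: "\<not> Q l" if "l \<le> m" for l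
  proof
    assume "Q l"
    then obtain g where g: "g \<in> G" "sublist g (take l y)" unfolding Q_def by blast
    have "take l y = take l w" using that wp(1) unfolding y_def by simp
    then have "sublist g w" using g(2) by (metis sublist_order.order_trans sublist_take)
    then show False using wp(6) g(1) unfolding avoids_def by blast
  qed
  have Lm: "L > m" using QL nQm by (meson not_le)
  define x where "x = take L y"
  have lx: "length x = L" unfolding x_def using Ln ly by simp
  obtain v where v: "v \<in> G" "sublist v x" using QL unfolding Q_def x_def by blast
  have bx: "butlast x = take (L - 1) y" unfolding x_def using Ln ly by (simp add: butlast_take)
  have nb: "\<not> sublist h (butlast x)" if "h \<in> G" for h
    using nQ[of "L - 1"] Lm that unfolding Q_def bx by auto
  have vs: "suffix v x" using sub_butlast[OF v(2)] nb[OF v(1)] by blast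
  define k where "k = L - m + 1"
  have k2: "2 \<le> k" "k \<le> length u" using Lm Ln nu unfolding k_def m_def by auto
  have xk: "x = w' @ take k u"
  proof -
    have "x = take L (w' @ u)" unfolding x_def yw'u ..
    also have "\<dots> = w' @ take (L - length w') u" using lw' Lm by simp
    also have "L - length w' = k" using lw' Lm m1 unfolding k_def by simp
    finally show ?thesis .
  qed
  have lk: "length (take k u) = k" using k2 by simp
  have kv: "k \<le> length v"
  proof (rule ccontr)
    assume "\<not> k \<le> length v"
    then have lt: "length v < k" by simp
    have "suffix v (take k u)"
    proof -
      have "suffix v (w' @ take k u)" using vs xk by simp
      then consider "suffix v (take k u)" | xs' where "v = xs' @ take k u" "suffix xs' w'"
        unfolding suffix_append by blast
      then show ?thesis
      proof cases
        case 2 then have "length v \<ge> k" using lk by simp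
        then show ?thesis using lt by simp
      qed
    qed
    then have "sublist v u" by (metis suffix_imp_sublist sublist_order.order_trans sublist_take)
    then have "v = u" using red v(1) u(1) unfolding reduced_def by blast
    then show False using lt k2 by simp
  qed
  have v2: "length v \<ge> 2" using kv k2 by simp
  define s where "s = length v - k"
  have vs_k: "length v - s = k" unfolding s_def using kv by simp
  have dv: "drop s v = take k u"
  proof -
    obtain z where z: "x = z @ v" using vs unfolding suffix_def by blast
    have "drop (length x - k) x = drop s v" unfolding z s_def using kv by simp
    moreover have "drop (length x - k) x = take k u" unfolding xk using lk by simp
    ultimately show ?thesis by simp
  qed
  have sSp: "s \<in> Sp v u" unfolding Sp_iff s_def using k2 kv by auto
  have cc: "corr_c s v u = 1" unfolding corr_c_1 vs_k using dv k2 by simp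
  have eek: "ee u v s = length u - k" unfolding ee_def s_def using kv by simp
  have een: "ee u v s \<le> n" using eek nu by simp
  have Lee: "n - ee u v s = L" using eek k2 nu Lm unfolding k_def m_def by simp
  have fae: "first_at_end G v x"
  proof (rule fae_intro[OF vs])
    fix ps ss assume "x = ps @ v @ ss"
    then show "ss = []" using sub_butlast_occ nb[OF v(1)] by blast
  next
    fix h assume h: "h \<in> G" "h \<noteq> v"
    show "\<not> sublist h x"
    proof
      assume "sublist h x"
      then have "suffix h x" using sub_butlast nb[OF h(1)] by blast
      then show False using two_suf[OF h(1) v(1) _ vs] h(2) by blast
    qed
  qed
  have xN: "x \<in> NuS N A G (n - ee u v s) v"
    unfolding NuS_def Lee using lx yset ya fae unfolding x_def
    by (auto dest: in_set_takeD intro: allowed_take)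
  have "(v, s, x) \<in> TS N A G u n"
    unfolding TS_def XS_def using v(1) v2 sSp een cc xN by auto
  moreover have "psi u n (v, s, x) = w"
  proof -
    have "psi u n (v, s, x) = take m x" unfolding psi_def m_def by simp
    also have "\<dots> = take m y" unfolding x_def using Lm by simp
    also have "\<dots> = w" unfolding y_def using wp(1) by simp
    finally show ?thesis .
  qed
  ultimately show ?thesis by (metis image_eqI)
qed

lemma psi_bij:
  assumes u: "u \<in> G" "length u \<ge> 2"
  shows "bij_betw (psi u n) (TS N A G u n) (MuS N A G (n + 1 - length u) (hd u))"
  unfolding bij_betw_def
proof
  show "inj_on (psi u n) (TS N A G u n)" using psi_inj[OF u] .
  show "psi u n ` TS N A G u n = MuS N A G (n + 1 - length u) (hd u)"
  proof
    show "psi u n ` TS N A G u n \<subseteq> MuS N A G (n + 1 - length u) (hd u)"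
    proof
      fix w assume "w \<in> psi u n ` TS N A G u n"
      then obtain t where t: "t \<in> TS N A G u n" "w = psi u n t" by blast
      obtain v s x where "t = (v, s, x)" by (cases t) auto
      then show "w \<in> MuS N A G (n + 1 - length u) (hd u)" using psi_props(1)[OF _ u] t by simp
    qed
    show "MuS N A G (n + 1 - length u) (hd u) \<subseteq> psi u n ` TS N A G u n"
      using psi_surj[OF u] by blast
  qed
qed

end




lemma MuS_0: "MuS N A G 0 i = {}" unfolding MuS_def by auto

lemma mu_end_0: "mu_end N A p P G 0 i = 0" by (simp add: mu_S MuS_0)

lemma NuS_small: "length x < length v \<Longrightarrow> x \<notin> NuS N A G (length x) v"
proof
  assume "length x < length v" "x \<in> NuS N A G (length x) v"
  then have "suffix v x" using fae_suffix unfolding NuS_def by blast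
  then show False using suffix_length_le \<open>length x < length v\<close> by fastforce
qed

lemma nu_end_small: "n < length v \<Longrightarrow> nu_end N A p P G n v = 0"
proof -
  assume n: "n < length v"
  have "NuS N A G n v = {}"
  proof (rule ccontr)
    assume "NuS N A G n v \<noteq> {}"
    then obtain x where x: "x \<in> NuS N A G n v" by blast
    then have "length x = n" unfolding NuS_def by blast
    then show False using NuS_small[of x v N A G] x n by simp
  qed
  then show ?thesis by (simp add: nu_S)
qed

context
  fixes N :: nat and A :: "nat \<Rightarrow> nat \<Rightarrow> nat" and P :: "nat \<Rightarrow> nat \<Rightarrow> real"
    and p :: "nat \<Rightarrow> real" and G :: "nat list set"
  assumes zo: "zero_one_mat N A" and irr: "irreducible_mat N A"
    and rs: "row_stochastic_compatible N A P"
    and fin: "finite G" and Gw: "\<forall>w\<in>G. w \<noteq> [] \<and> allowed N A w" and red: "reduced G"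
begin

lemma mu_end_1:
  assumes i: "i \<in> alphabet N" and iG: "[i] \<notin> G"
  shows "mu_end N A p P G 1 i = p i"
proof -
  have "MuS N A G 1 i = {[i]}"
  proof
    show "MuS N A G 1 i \<subseteq> {[i]}"
    proof
      fix w assume "w \<in> MuS N A G 1 i"
      then have "length w = 1" "last w = i" unfolding MuS_def by blast+
      then show "w \<in> {[i]}" by (cases w) auto
    qed
    have av: "avoids G [i]" unfolding avoids_def
    proof (intro ballI notI)
      fix g assume g: "g \<in> G" "sublist g [i]"
      then obtain ps ss where e: "[i] = ps @ g @ ss" unfolding sublist_def by blast
      have "g \<noteq> []" using Gw g(1) by blast
      then have "g = [i]" using e by (cases ps; cases g) auto
      then show False using g(1) iG by simp
    qed
    show "{[i]} \<subseteq> MuS N A G 1 i"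
      unfolding MuS_def using allowed_single[OF zo irr i] av i by simp
  qed
  then show ?thesis by (simp add: mu_S markov_cyl_def delta_dl)
qed

lemma eq1_coeff:
  assumes i: "i \<in> alphabet N" and iG: "[i] \<notin> G"
  shows "mu_end N A p P G n i - p i * (if n = 1 then 1 else 0)
     + (\<Sum>v\<in>{v\<in>G. length v \<ge> 2}. if i = last v then nu_end N A p P G n v else 0)
     = (if n = 0 then 0 else (\<Sum>j\<in>alphabet N - {a. [a] \<in> G}. mu_end N A p P G (n - 1) j * P j i))"
proof (cases n)
  case 0
  have "(\<Sum>v\<in>{v\<in>G. length v \<ge> 2}. if i = last v then nu_end N A p P G n v else 0) = 0"
    using 0 by (intro sum.neutral) (auto intro: nu_end_small)
  then show ?thesis using 0 by (simp add: mu_end_0)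
next
  case (Suc m)
  show ?thesis
  proof (cases m)
    case 0
    have "(\<Sum>v\<in>{v\<in>G. length v \<ge> 2}. if i = last v then nu_end N A p P G n v else 0) = 0"
      using Suc 0 by (intro sum.neutral) (auto intro: nu_end_small)
    then show ?thesis using Suc 0 mu_end_1[OF i iG] by (simp add: mu_end_0)
  next
    case (Suc m')
    then have m1: "1 \<le> m" by simp
    have "mu_end N A p P G n i
        + (\<Sum>v\<in>{v\<in>G. length v \<ge> 2}. if i = last v then nu_end N A p P G n v else 0)
        = (\<Sum>j\<in>alphabet N - {a. [a] \<in> G}. mu_end N A p P G m j * P j i)"
      unfolding \<open>n = Suc m\<close>
      using eq1_left[OF zo irr rs fin Gw red m1 i iG] eq1_right[OF zo irr rs fin Gw red m1 i]
      by simp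
    then show ?thesis using \<open>n = Suc m\<close> m1 by simp
  qed
qed

end

lemma tau_tilde_eq:
  assumes v: "v \<noteq> []" and u: "u \<noteq> []"
  shows "tau_tilde P v u = (\<Sum>s\<in>Sp v u. fps_const (corr_c s v u * corr_delta P s v u) * fps_X ^ ee u v s)"
proof -
  define S where "S = (if length v < length u then {0..length v - 1} else {length v - length u..length v - 1})"
  define t where "t s = fps_const (corr_c s v u * corr_delta P s v u) * (fps_X :: real fps) ^ ee u v s" for s
  have tau: "tau P v u = (\<Sum>s\<in>S. t s)" unfolding tau_def Let_def S_def t_def ee_def by simp
  have "length u \<noteq> 0" using u by simp
  then have le: "length v - length u \<le> length v - 1" by linarith
  have s0: "length v - 1 \<in> S" unfolding S_def using le by auto
  have finS: "finite S" unfolding S_def by simp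
  have Sp: "Sp v u = S - {length v - 1}" unfolding Sp_def S_def ..
  have e0: "ee u v (length v - 1) = length u - 1" unfolding ee_def using v by (cases v) auto
  have c0: "corr_delta P (length v - 1) v u = delta P u"
  proof -
    have a: "1 \<le> length v - (length v - 1)" using v by (cases v) auto
    have b: "length v - (length v - 1) \<le> length u" using v u by (cases v; cases u) auto
    have c: "length v - (length v - 1) - 1 = 0" using v by (cases v) auto
    show ?thesis using corr_delta_dl[OF a b, of P] c by (simp add: delta_dl)
  qed
  have "tau P v u = t (length v - 1) + (\<Sum>s\<in>Sp v u. t s)"
    unfolding tau Sp by (rule sum.remove[OF finS s0])
  moreover have "t (length v - 1) = fps_X ^ (length u - 1) * fps_const (corr_c (length v - 1) v u * delta P u)"
    unfolding t_def e0 c0 by (simp add: mult.commute)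
  ultimately show ?thesis unfolding tau_tilde_def t_def by simp
qed

lemma if01_nth: "((if c then 1 else 0) * (f :: real fps)) $ n = (if c then f $ n else 0)"
  by (cases c) auto

lemma corr_c_cases: "corr_c s v u = 0 \<or> corr_c s v u = 1"
  unfolding corr_c_def by simp

context
  fixes N :: nat and A :: "nat \<Rightarrow> nat \<Rightarrow> nat" and P :: "nat \<Rightarrow> nat \<Rightarrow> real"
    and p :: "nat \<Rightarrow> real" and G :: "nat list set"
  assumes zo: "zero_one_mat N A" and irr: "irreducible_mat N A"
    and rs: "row_stochastic_compatible N A P"
    and fin: "finite G" and Gw: "\<forall>w\<in>G. w \<noteq> [] \<and> allowed N A w" and red: "reduced G"
begin

lemma eq2_right_v:
  assumes v: "v \<noteq> []" and u: "u \<noteq> []"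
  shows "(tau_tilde P v u * G_series N A p P G v) $ n
       = (\<Sum>s\<in>Sp v u. \<Sum>x\<in>XS N A G u n v s. corr_delta P s v u * markov_cyl p P x)"
proof -
  have "(tau_tilde P v u * G_series N A p P G v) $ n
      = (\<Sum>s\<in>Sp v u. (fps_const (corr_c s v u * corr_delta P s v u) * (fps_X ^ ee u v s * G_series N A p P G v)) $ n)"
    unfolding tau_tilde_eq[OF v u] sum_distrib_right fps_sum_nth by (simp add: mult.assoc)
  also have "\<dots> = (\<Sum>s\<in>Sp v u. \<Sum>x\<in>XS N A G u n v s. corr_delta P s v u * markov_cyl p P x)"
  proof (rule sum.cong[OF refl])
    fix s
    show "(fps_const (corr_c s v u * corr_delta P s v u) * (fps_X ^ ee u v s * G_series N A p P G v)) $ n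
        = (\<Sum>x\<in>XS N A G u n v s. corr_delta P s v u * markov_cyl p P x)"
    proof (cases "corr_c s v u = 1 \<and> ee u v s \<le> n")
      case True
      then have "XS N A G u n v s = NuS N A G (n - ee u v s) v" unfolding XS_def by auto
      then show ?thesis using True
        by (simp add: fps_X_power_mult_nth G_nth[OF v] nu_S sum_distrib_left)
    next
      case False
      then have "XS N A G u n v s = {}" unfolding XS_def by auto
      moreover have "corr_c s v u = 0 \<or> n < ee u v s" using False corr_c_cases[of s v u] by auto
      ultimately show ?thesis by (auto simp: fps_X_power_mult_nth)
    qed
  qed
  finally show ?thesis .
qed

lemma finite_TS_parts:
  "finite (Sp v u)" "finite (XS N A G u n v s)"
proof -
  show "finite (Sp v u)" unfolding Sp_def by simp
  show "finite (XS N A G u n v s)"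
    by (rule finite_subset[OF _ finite_NuS[of N A G "n - ee u v s" v]]) (auto simp: XS_def)
qed

lemma eq2_coeff:
  assumes u: "u \<in> G" "length u \<ge> 2"
  shows "(fps_X ^ (length u - 1) * fps_const (delta P u) * F_series N A p P G (hd u)) $ n
       = (\<Sum>v\<in>{v\<in>G. length v \<ge> 2}. tau_tilde P v u * G_series N A p P G v) $ n"
proof -
  let ?G2 = "{v\<in>G. length v \<ge> 2}"
  have une: "u \<noteq> []" using u by auto
  have finG2: "finite ?G2" using fin by simp
  have "(fps_X ^ (length u - 1) * fps_const (delta P u) * F_series N A p P G (hd u)) $ n
      = delta P u * mu_end N A p P G (n + 1 - length u) (hd u)"
  proof (cases "n < length u - 1")
    case True
    then have "n + 1 - length u = 0" by simp
    then show ?thesis using True by (simp add: mult.assoc fps_X_power_mult_nth mu_end_0)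
  next
    case False
    then have "n - (length u - 1) = n + 1 - length u" using une by (cases u) auto
    then show ?thesis using False by (simp add: mult.assoc fps_X_power_mult_nth F_nth)
  qed
  also have "\<dots> = (\<Sum>w\<in>MuS N A G (n + 1 - length u) (hd u). delta P u * markov_cyl p P w)"
    by (simp add: mu_S sum_distrib_left)
  also have "\<dots> = (\<Sum>t\<in>TS N A G u n. delta P u * markov_cyl p P (psi u n t))"
    by (rule sum.reindex_bij_betw[OF psi_bij[OF zo irr rs fin Gw red u], symmetric])
  also have "\<dots> = (\<Sum>t\<in>TS N A G u n. case t of (v, s, x) \<Rightarrow> corr_delta P s v u * markov_cyl p P x)"
  proof (rule sum.cong[OF refl])
    fix t assume t: "t \<in> TS N A G u n"
    obtain v s x where tv: "t = (v, s, x)" by (cases t) auto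
    show "delta P u * markov_cyl p P (psi u n t) = (case t of (v, s, x) \<Rightarrow> corr_delta P s v u * markov_cyl p P x)"
      using psi_props(2)[OF zo irr rs fin Gw red t[unfolded tv] u] tv by simp
  qed
  also have "\<dots> = (\<Sum>v\<in>?G2. \<Sum>(s, x)\<in>(SIGMA s:Sp v u. XS N A G u n v s). corr_delta P s v u * markov_cyl p P x)"
    unfolding TS_def by (rule sum.Sigma[symmetric]) (use finG2 finite_TS_parts in auto)
  also have "\<dots> = (\<Sum>v\<in>?G2. \<Sum>s\<in>Sp v u. \<Sum>x\<in>XS N A G u n v s. corr_delta P s v u * markov_cyl p P x)"
    by (rule sum.cong[OF refl], rule sum.Sigma[symmetric]) (use finite_TS_parts in auto)
  also have "\<dots> = (\<Sum>v\<in>?G2. (tau_tilde P v u * G_series N A p P G v) $ n)"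
  proof (rule sum.cong[OF refl])
    fix v assume "v \<in> ?G2"
    then have "v \<noteq> []" by auto
    then show "(\<Sum>s\<in>Sp v u. \<Sum>x\<in>XS N A G u n v s. corr_delta P s v u * markov_cyl p P x)
        = (tau_tilde P v u * G_series N A p P G v) $ n"
      using eq2_right_v[OF _ une] by simp
  qed
  also have "\<dots> = (\<Sum>v\<in>?G2. tau_tilde P v u * G_series N A p P G v) $ n"
    by (simp add: fps_sum_nth)
  finally show ?thesis .
qed

end


theorem theorem4p5:
  fixes N :: nat and A :: "nat \<Rightarrow> nat \<Rightarrow> nat" and P :: "nat \<Rightarrow> nat \<Rightarrow> real"
    and p :: "nat \<Rightarrow> real" and G :: "nat list set"
  assumes "zero_one_mat N A" and "irreducible_mat N A"
    and "row_stochastic_compatible N A P"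
    and "stationary N P p"
    and "finite G" and "\<forall>w\<in>G. w \<noteq> [] \<and> allowed N A w" and "reduced G"
  shows "(\<forall>i\<in>alphabet N - {a. [a] \<in> G}.
            F_series N A p P G i - fps_const (p i) * fps_X
              + (\<Sum>v\<in>{v\<in>G. length v \<ge> 2}. (if i = last v then 1 else 0) * G_series N A p P G v)
            = fps_X * (\<Sum>j\<in>alphabet N - {a. [a] \<in> G}. F_series N A p P G j * fps_const (P j i)))
       \<and> (\<forall>u\<in>{v\<in>G. length v \<ge> 2}.
            fps_X ^ (length u - 1) * fps_const (delta P u) * F_series N A p P G (hd u)
            = (\<Sum>v\<in>{v\<in>G. length v \<ge> 2}. tau_tilde P v u * G_series N A p P G v))"
proof (intro conjI ballI)
  fix i assume i: "i \<in> alphabet N - {a. [a] \<in> G}"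
  show "F_series N A p P G i - fps_const (p i) * fps_X
              + (\<Sum>v\<in>{v\<in>G. length v \<ge> 2}. (if i = last v then 1 else 0) * G_series N A p P G v)
            = fps_X * (\<Sum>j\<in>alphabet N - {a. [a] \<in> G}. F_series N A p P G j * fps_const (P j i))"
  proof (rule fps_ext)
    fix n
    have "(\<Sum>v\<in>{v\<in>G. length v \<ge> 2}. (if i = last v then 1 else 0) * G_series N A p P G v) $ n
        = (\<Sum>v\<in>{v\<in>G. length v \<ge> 2}. if i = last v then nu_end N A p P G n v else 0)"
      unfolding fps_sum_nth if01_nth by (intro sum.cong refl) (auto intro: G_nth)
    moreover have "(fps_X * (\<Sum>j\<in>alphabet N - {a. [a] \<in> G}. F_series N A p P G j * fps_const (P j i))) $ n
        = (if n = 0 then 0 else (\<Sum>j\<in>alphabet N - {a. [a] \<in> G}. mu_end N A p P G (n - 1) j * P j i))"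
      by (simp add: fps_sum_nth F_nth)
    moreover have "(F_series N A p P G i - fps_const (p i) * fps_X) $ n
        = mu_end N A p P G n i - p i * (if n = 1 then 1 else 0)"
      by (simp add: F_nth)
    ultimately show "(F_series N A p P G i - fps_const (p i) * fps_X
              + (\<Sum>v\<in>{v\<in>G. length v \<ge> 2}. (if i = last v then 1 else 0) * G_series N A p P G v)) $ n
        = (fps_X * (\<Sum>j\<in>alphabet N - {a. [a] \<in> G}. F_series N A p P G j * fps_const (P j i))) $ n"
      using eq1_coeff[OF assms(1,2,3,5,6,7), where i=i and n=n and p=p] i by simp
  qed
next
  fix u assume u: "u \<in> {v\<in>G. length v \<ge> 2}"
  show "fps_X ^ (length u - 1) * fps_const (delta P u) * F_series N A p P G (hd u)
            = (\<Sum>v\<in>{v\<in>G. length v \<ge> 2}. tau_tilde P v u * G_series N A p P G v)"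
    by (rule fps_ext) (use eq2_coeff[OF assms(1,2,3,5,6,7)] u in auto)
qed


end
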